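(* Let $(X,d,\alpha)$ be a computable metric space. Suppose $A$, $B$ and $S$ are subsets of $X$ such that $A\subseteq S$ and $B\subseteq S$ and such that $A$ and $B$ are computable up to $S$. Then $A\cup B$ is computable up to $S$.
   Context: A computable metric space is a triple $(X,d,\alpha)$ where $(X,d)$ is a metric space and $\alpha=(\alpha_i)_{i\in\mathbb N}$ is a sequence with dense range in $(X,d)$ such that $(i,j)\mapsto d(\alpha_i,\alpha_j)$ is a computable function $\mathbb N^2\to\mathbb R$. Fix computable $\sigma:\mathbb N^2\to\mathbb N$, $\eta:\mathbb N\to\mathbb N$ such that $\{(\sigma(j,0),\dots,\sigma(j,\eta(j))):j\in\mathbb N\}$ is the set of all nonempty finite sequences in $\mathbb N$; let $[j]=\{\sigma(j,i):0\le i\le\eta(j)\}$ and $\Lambda_j=\{\alpha_i:i\in[j]\}$. For $A,B\subseteq X$ and $\varepsilon>0$ write $A\prec_\varepsilon B$ if for each $a\in A$ there is $b\in B$ with $d(a,b)<\varepsilon$. For $A\subseteq S\subseteq X$, $A$ is computable up to $S$ if there is a computable $f:\mathbb N\to\mathbb N$ with $A\prec_{2^{-k}}\Lambda_{f(k)}$ and $\Lambda_{f(k)}\prec_{2^{-k}}S$ for all $k\in\mathbb N$. *)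

theory Defs
  imports "HOL-Analysis.Analysis"
begin

text \<open>Functions of variable arity are represented as functions on lists of naturals;
missing arguments are read as 0.  The class of total recursive functions is the least
class containing zero, successor and projections, closed under composition, primitive
recursion and minimization of regular functions.\<close>

definition hd0 :: "nat list \<Rightarrow> nat" where
  "hd0 xs = (case xs of [] \<Rightarrow> 0 | x # _ \<Rightarrow> x)"

definition arg :: "nat \<Rightarrow> nat list \<Rightarrow> nat" where
  "arg i xs = (if i < length xs then xs ! i else 0)"

inductive total_recursive :: "(nat list \<Rightarrow> nat) \<Rightarrow> bool" where
  zero: "total_recursive (\<lambda>_. 0)"
| succ: "total_recursive (\<lambda>xs. Suc (hd0 xs))"
| proj: "total_recursive (arg i)"
| comp: "total_recursive f \<Longrightarrow> (\<forall>g\<in>set gs. total_recursive g) \<Longrightarrow>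
         total_recursive (\<lambda>xs. f (map (\<lambda>g. g xs) gs))"
| prim: "total_recursive f \<Longrightarrow> total_recursive g \<Longrightarrow>
         total_recursive (\<lambda>xs. rec_nat (f (tl xs)) (\<lambda>n r. g (r # n # tl xs)) (hd0 xs))"
| mini: "total_recursive g \<Longrightarrow> (\<forall>xs. \<exists>y. g (y # xs) = 0) \<Longrightarrow>
         total_recursive (\<lambda>xs. LEAST y. g (y # xs) = 0)"

definition computable1 :: "(nat \<Rightarrow> nat) \<Rightarrow> bool" where
  "computable1 f \<longleftrightarrow> total_recursive (\<lambda>xs. f (arg 0 xs))"

definition computable2 :: "(nat \<Rightarrow> nat \<Rightarrow> nat) \<Rightarrow> bool" where
  "computable2 f \<longleftrightarrow> total_recursive (\<lambda>xs. f (arg 0 xs) (arg 1 xs))"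

definition computable3 :: "(nat \<Rightarrow> nat \<Rightarrow> nat \<Rightarrow> nat) \<Rightarrow> bool" where
  "computable3 f \<longleftrightarrow> total_recursive (\<lambda>xs. f (arg 0 xs) (arg 1 xs) (arg 2 xs))"

definition computable_real2 :: "(nat \<Rightarrow> nat \<Rightarrow> real) \<Rightarrow> bool" where
  "computable_real2 r \<longleftrightarrow> (\<exists>a b c. computable3 a \<and> computable3 b \<and> computable3 c \<and>
     (\<forall>i j k. \<bar>r i j - (real (a i j k) - real (b i j k)) / (real (c i j k) + 1)\<bar> < (1/2) ^ k))"

definition computable_metric_space :: "'a set \<Rightarrow> ('a \<Rightarrow> 'a \<Rightarrow> real) \<Rightarrow> (nat \<Rightarrow> 'a) \<Rightarrow> bool" where
  "computable_metric_space X d \<alpha> \<longleftrightarrow> Metric_space X d \<and> range \<alpha> \<subseteq> X \<and>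
     (\<forall>x\<in>X. \<forall>e>0. \<exists>i. d x (\<alpha> i) < e) \<and>
     computable_real2 (\<lambda>i j. d (\<alpha> i) (\<alpha> j))"

definition seq_enum :: "(nat \<Rightarrow> nat \<Rightarrow> nat) \<Rightarrow> (nat \<Rightarrow> nat) \<Rightarrow> bool" where
  "seq_enum \<sigma> \<eta> \<longleftrightarrow> computable2 \<sigma> \<and> computable1 \<eta> \<and>
     {map (\<sigma> j) [0..<Suc (\<eta> j)] | j. True} = {xs. xs \<noteq> []}"

definition Lambda :: "(nat \<Rightarrow> 'a) \<Rightarrow> (nat \<Rightarrow> nat \<Rightarrow> nat) \<Rightarrow> (nat \<Rightarrow> nat) \<Rightarrow> nat \<Rightarrow> 'a set" where
  "Lambda \<alpha> \<sigma> \<eta> j = {\<alpha> (\<sigma> j i) | i. i \<le> \<eta> j}"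

definition prec :: "('a \<Rightarrow> 'a \<Rightarrow> real) \<Rightarrow> 'a set \<Rightarrow> 'a set \<Rightarrow> real \<Rightarrow> bool" where
  "prec d A B \<epsilon> \<longleftrightarrow> (\<forall>a\<in>A. \<exists>b\<in>B. d a b < \<epsilon>)"

definition computable_up_to ::
  "('a \<Rightarrow> 'a \<Rightarrow> real) \<Rightarrow> (nat \<Rightarrow> 'a) \<Rightarrow> (nat \<Rightarrow> nat \<Rightarrow> nat) \<Rightarrow> (nat \<Rightarrow> nat) \<Rightarrow> 'a set \<Rightarrow> 'a set \<Rightarrow> bool" where
  "computable_up_to d \<alpha> \<sigma> \<eta> A S \<longleftrightarrow> (\<exists>f. computable1 f \<and>
     (\<forall>k. prec d A (Lambda \<alpha> \<sigma> \<eta> (f k)) ((1/2) ^ k) \<and>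
          prec d (Lambda \<alpha> \<sigma> \<eta> (f k)) S ((1/2) ^ k)))"

end

theory Submission
  imports Defs
begin

lemma tr_cong: "total_recursive f \<Longrightarrow> (\<And>xs. f xs = g xs) \<Longrightarrow> total_recursive g"
proof -
  assume "total_recursive f" "\<And>xs. f xs = g xs"
  moreover have "f = g" using calculation(2) by auto
  ultimately show ?thesis by simp
qed

lemma arg_simps[simp]: "arg 0 (x # xs) = x" "arg (Suc i) (x # xs) = arg i xs"
  "arg i (tl xs) = arg (Suc i) xs" "hd0 xs = arg 0 xs"
  by (cases xs; simp add: arg_def hd0_def nth_tl)+

lemma arg_num[simp]: "arg 1 (x # xs) = arg 0 xs" "arg 2 (x # xs) = arg 1 xs"
  "arg 3 (x # xs) = arg 2 xs" "arg 4 (x # xs) = arg 3 xs"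
  by (simp_all add: numeral_eq_Suc)

lemma tr_arg: "total_recursive (\<lambda>xs. arg i xs)"
  by (rule total_recursive.proj)

lemma tr_comp1:
  assumes "total_recursive (\<lambda>xs. u (arg 0 xs))" "total_recursive F"
  shows "total_recursive (\<lambda>xs. u (F xs))"
  using total_recursive.comp[OF assms(1), of "[F]"] assms(2) by simp

lemma tr_comp2:
  assumes "total_recursive (\<lambda>xs. u (arg 0 xs) (arg 1 xs))" "total_recursive F" "total_recursive G"
  shows "total_recursive (\<lambda>xs. u (F xs) (G xs))"
  using total_recursive.comp[OF assms(1), of "[F,G]"] assms(2,3) by simp

lemma tr_const1: "total_recursive (\<lambda>xs. 1)"
  using total_recursive.comp[OF total_recursive.succ, of "[\<lambda>_. 0]"] total_recursive.zero
  by (simp add: hd0_def)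

lemma rec_add: "rec_nat y (\<lambda>n r. Suc r) x = x + y" by (induct x) auto
lemma rec_pred: "rec_nat 0 (\<lambda>n r. n) x = x - 1" by (induct x) auto
lemma rec_monus: "rec_nat x (\<lambda>n r. r - Suc 0) y = x - y" by (induct y) auto
lemma rec_mult: "rec_nat 0 (\<lambda>n r. r + y) x = x * y" by (induct x) auto
lemma rec_sum: "rec_nat 0 (\<lambda>n r. r + h n) m = (\<Sum>i<m. h i)" by (induct m) auto

lemma tr_add0: "total_recursive (\<lambda>xs. arg 0 xs + arg 1 xs)"
proof (rule tr_cong)
  show "total_recursive (\<lambda>xs. rec_nat (arg 0 (tl xs)) (\<lambda>n r. Suc (hd0 (r # n # tl xs))) (hd0 xs))"
    by (rule total_recursive.prim[OF total_recursive.proj total_recursive.succ])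
qed (simp add: rec_add)

lemma tr_pred0: "total_recursive (\<lambda>xs. arg 0 xs - 1)"
proof (rule tr_cong)
  show "total_recursive (\<lambda>xs. rec_nat ((\<lambda>_. 0) (tl xs)) (\<lambda>n r. arg 1 (r # n # tl xs)) (hd0 xs))"
    by (rule total_recursive.prim[OF total_recursive.zero total_recursive.proj])
qed (simp add: rec_pred)

lemma tr_monus0: "total_recursive (\<lambda>xs. arg 1 xs - arg 0 xs)"
proof (rule tr_cong)
  show "total_recursive (\<lambda>xs. rec_nat (arg 0 (tl xs)) (\<lambda>n r. (\<lambda>ys. arg 0 ys - 1) (r # n # tl xs)) (hd0 xs))"
    by (rule total_recursive.prim[OF total_recursive.proj tr_pred0])
qed (simp add: rec_monus)

lemma tr_add: "total_recursive F \<Longrightarrow> total_recursive G \<Longrightarrow> total_recursive (\<lambda>xs. F xs + G xs)"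
  using tr_comp2[of "\<lambda>a b. a + b", OF tr_add0] by simp

lemma tr_minus: "total_recursive F \<Longrightarrow> total_recursive G \<Longrightarrow> total_recursive (\<lambda>xs. F xs - G xs)"
  using tr_comp2[of "\<lambda>a b. b - a", OF tr_monus0] by simp

lemma tr_mult0: "total_recursive (\<lambda>xs. arg 0 xs * arg 1 xs)"
proof (rule tr_cong)
  have g: "total_recursive (\<lambda>ys. arg 0 ys + arg 2 ys)" by (intro tr_add tr_arg)
  show "total_recursive (\<lambda>xs. rec_nat ((\<lambda>_. 0) (tl xs)) (\<lambda>n r. (\<lambda>ys. arg 0 ys + arg 2 ys) (r # n # tl xs)) (hd0 xs))"
    by (rule total_recursive.prim[OF total_recursive.zero g])
qed (simp add: rec_mult)

lemma tr_mult: "total_recursive F \<Longrightarrow> total_recursive G \<Longrightarrow> total_recursive (\<lambda>xs. F xs * G xs)"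
  using tr_comp2[of "\<lambda>a b. a * b", OF tr_mult0] by simp

lemma tr_sum:
  assumes "total_recursive (\<lambda>ys. D (arg 1 ys) (arg 2 ys) (arg 3 ys) (arg 4 ys))"
  shows "total_recursive (\<lambda>xs. \<Sum>i<arg 0 xs. D i (arg 1 xs) (arg 2 xs) (arg 3 xs))"
proof (rule tr_cong)
  have g: "total_recursive (\<lambda>ys. arg 0 ys + D (arg 1 ys) (arg 2 ys) (arg 3 ys) (arg 4 ys))"
    by (intro tr_add tr_arg assms)
  show "total_recursive (\<lambda>xs. rec_nat ((\<lambda>_. 0) (tl xs)) (\<lambda>n r. (\<lambda>ys. arg 0 ys + D (arg 1 ys) (arg 2 ys) (arg 3 ys) (arg 4 ys)) (r # n # tl xs)) (hd0 xs))"
    by (rule total_recursive.prim[OF total_recursive.zero g])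
qed (simp add: rec_sum numeral_eq_Suc)

lemma tr_comp4:
  assumes "total_recursive (\<lambda>xs. u (arg 0 xs) (arg 1 xs) (arg 2 xs) (arg 3 xs))"
    "total_recursive F" "total_recursive G" "total_recursive H" "total_recursive K"
  shows "total_recursive (\<lambda>xs. u (F xs) (G xs) (H xs) (K xs))"
  using total_recursive.comp[OF assms(1), of "[F,G,H,K]"] assms(2-) by (simp add: numeral_eq_Suc)

lemma tr_suc: "total_recursive F \<Longrightarrow> total_recursive (\<lambda>xs. Suc (F xs))"
  using tr_comp1[of Suc, OF _] total_recursive.succ by simp

lemma tr_c1: "computable1 f \<Longrightarrow> total_recursive F \<Longrightarrow> total_recursive (\<lambda>xs. f (F xs))"
  unfolding computable1_def by (rule tr_comp1)

lemma tr_c2: "computable2 f \<Longrightarrow> total_recursive F \<Longrightarrow> total_recursive G \<Longrightarrow> total_recursive (\<lambda>xs. f (F xs) (G xs))"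
  unfolding computable2_def by (rule tr_comp2)



definition Cf :: "(nat \<Rightarrow> nat \<Rightarrow> nat) \<Rightarrow> (nat \<Rightarrow> nat) \<Rightarrow> nat \<Rightarrow> nat \<Rightarrow> nat \<Rightarrow> nat" where
  "Cf \<sigma> \<eta> i a b = \<sigma> a i * (1 - (i - \<eta> a)) + \<sigma> b (i - Suc (\<eta> a)) * (1 - (1 - (i - \<eta> a)))"

definition Df where
  "Df \<sigma> \<eta> i j a b = (\<sigma> j i - Cf \<sigma> \<eta> i a b) + (Cf \<sigma> \<eta> i a b - \<sigma> j i)"

definition Tf where
  "Tf \<sigma> \<eta> j a b = ((\<eta> j - Suc (\<eta> a + \<eta> b)) + (Suc (\<eta> a + \<eta> b) - \<eta> j))
     + (\<Sum>i<Suc (\<eta> j). Df \<sigma> \<eta> i j a b)"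

lemma Cf_eq: "Cf \<sigma> \<eta> i a b = (if i \<le> \<eta> a then \<sigma> a i else \<sigma> b (i - Suc (\<eta> a)))"
  unfolding Cf_def by simp

lemma Tf_zero: "Tf \<sigma> \<eta> j a b = 0 \<longleftrightarrow> \<eta> j = Suc (\<eta> a + \<eta> b) \<and> (\<forall>i\<le>\<eta> j. \<sigma> j i = Cf \<sigma> \<eta> i a b)"
proof -
  have "(\<Sum>i<Suc (\<eta> j). Df \<sigma> \<eta> i j a b) = 0 \<longleftrightarrow> (\<forall>i\<le>\<eta> j. \<sigma> j i = Cf \<sigma> \<eta> i a b)"
  proof -
    have d: "Df \<sigma> \<eta> i j a b = 0 \<longleftrightarrow> \<sigma> j i = Cf \<sigma> \<eta> i a b" for i
      unfolding Df_def by linarith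
    show ?thesis by (simp add: d lessThan_Suc_atMost atMost_iff Ball_def)
  qed
  then show ?thesis unfolding Tf_def by auto
qed


lemma tr_T:
  assumes "computable1 \<eta>" "computable2 \<sigma>" "total_recursive F" "total_recursive G" "total_recursive H"
  shows "total_recursive (\<lambda>xs. Tf \<sigma> \<eta> (F xs) (G xs) (H xs))"
proof -
  have D: "total_recursive (\<lambda>ys. Df \<sigma> \<eta> (arg 1 ys) (arg 2 ys) (arg 3 ys) (arg 4 ys))"
    unfolding Df_def Cf_def
    by (intro tr_add tr_minus tr_mult tr_c1[OF assms(1)] tr_c2[OF assms(2)] tr_suc tr_arg tr_const1)
  have S: "total_recursive (\<lambda>xs. (\<lambda>n j a b. \<Sum>i<n. Df \<sigma> \<eta> i j a b) (arg 0 xs) (arg 1 xs) (arg 2 xs) (arg 3 xs))"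
    using tr_sum[OF D] by simp
  have S2: "total_recursive (\<lambda>xs. (\<lambda>n j a b. \<Sum>i<n. Df \<sigma> \<eta> i j a b) (Suc (\<eta> (F xs))) (F xs) (G xs) (H xs))"
    by (rule tr_comp4[OF S]) (intro tr_suc tr_c1[OF assms(1)] assms(3-))+
  have S3: "total_recursive (\<lambda>xs. \<Sum>i<Suc (\<eta> (F xs)). Df \<sigma> \<eta> i (F xs) (G xs) (H xs))"
    using S2 by simp
  have "total_recursive (\<lambda>xs. ((\<eta> (F xs) - (1 + (\<eta> (G xs) + \<eta> (H xs)))) + ((1 + (\<eta> (G xs) + \<eta> (H xs))) - \<eta> (F xs)))
     + (\<Sum>i<Suc (\<eta> (F xs)). Df \<sigma> \<eta> i (F xs) (G xs) (H xs)))"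
    by (intro tr_add[OF _ S3] tr_add tr_minus tr_c1[OF assms(1)] tr_const1 assms(3-))
  then show ?thesis unfolding Tf_def by simp
qed


lemma Lambda_Tf:
  assumes "Tf \<sigma> \<eta> j a b = 0"
  shows "Lambda \<alpha> \<sigma> \<eta> j = Lambda \<alpha> \<sigma> \<eta> a \<union> Lambda \<alpha> \<sigma> \<eta> b"
proof -
  from assms have e: "\<eta> j = Suc (\<eta> a + \<eta> b)" and s: "\<And>i. i \<le> \<eta> j \<Longrightarrow> \<sigma> j i = Cf \<sigma> \<eta> i a b"
    by (auto simp: Tf_zero)
  show ?thesis
  proof (intro equalityI subsetI)
    fix x assume "x \<in> Lambda \<alpha> \<sigma> \<eta> j"
    then obtain i where i: "i \<le> \<eta> j" "x = \<alpha> (\<sigma> j i)" by (auto simp: Lambda_def)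
    show "x \<in> Lambda \<alpha> \<sigma> \<eta> a \<union> Lambda \<alpha> \<sigma> \<eta> b"
    proof (cases "i \<le> \<eta> a")
      case True then show ?thesis using i s[OF i(1)] by (auto simp: Lambda_def Cf_eq)
    next
      case False
      then have "i - Suc (\<eta> a) \<le> \<eta> b" using i e by auto
      then show ?thesis using False i s[OF i(1)] by (auto simp: Lambda_def Cf_eq)
    qed
  next
    fix x assume "x \<in> Lambda \<alpha> \<sigma> \<eta> a \<union> Lambda \<alpha> \<sigma> \<eta> b"
    then show "x \<in> Lambda \<alpha> \<sigma> \<eta> j"
    proof
      assume "x \<in> Lambda \<alpha> \<sigma> \<eta> a"
      then obtain i where i: "i \<le> \<eta> a" "x = \<alpha> (\<sigma> a i)" by (auto simp: Lambda_def)
      then have "i \<le> \<eta> j" "\<sigma> j i = \<sigma> a i" using e s[of i] by (auto simp: Cf_eq)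
      then show ?thesis using i unfolding Lambda_def by (metis (mono_tags, lifting) mem_Collect_eq)
    next
      assume "x \<in> Lambda \<alpha> \<sigma> \<eta> b"
      then obtain i where i: "i \<le> \<eta> b" "x = \<alpha> (\<sigma> b i)" by (auto simp: Lambda_def)
      then have "Suc (\<eta> a) + i \<le> \<eta> j" "\<sigma> j (Suc (\<eta> a) + i) = \<sigma> b i" using e s[of "Suc (\<eta> a) + i"] by (auto simp: Cf_eq)
      then show ?thesis using i unfolding Lambda_def by (metis (mono_tags, lifting) mem_Collect_eq)
    qed
  qed
qed


lemma Tf_exists:
  assumes "seq_enum \<sigma> \<eta>"
  shows "\<exists>j. Tf \<sigma> \<eta> j a b = 0"
proof -
  define L where "L = map (\<sigma> a) [0..<Suc (\<eta> a)] @ map (\<sigma> b) [0..<Suc (\<eta> b)]"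
  have eq: "{map (\<sigma> j) [0..<Suc (\<eta> j)] | j. True} = {xs. xs \<noteq> []}"
    using assms unfolding seq_enum_def by (rule conjunct2[OF conjunct2])
  have "L \<in> {xs. xs \<noteq> []}" by (simp add: L_def del: upt_Suc)
  then have "L \<in> {map (\<sigma> j) [0..<Suc (\<eta> j)] | j. True}" by (simp only: eq)
  then obtain j where j: "map (\<sigma> j) [0..<Suc (\<eta> j)] = L"
    unfolding mem_Collect_eq by metis
  have "length (map (\<sigma> j) [0..<Suc (\<eta> j)]) = length L" using j by (rule arg_cong)
  then have len: "\<eta> j = Suc (\<eta> a + \<eta> b)" by (simp add: L_def del: upt_Suc)
  have "\<forall>i\<le>\<eta> j. \<sigma> j i = Cf \<sigma> \<eta> i a b"
  proof (intro allI impI)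
    fix i assume i: "i \<le> \<eta> j"
    have "\<sigma> j i = map (\<sigma> j) [0..<Suc (\<eta> j)] ! i" using i by (simp del: upt_Suc)
    also have "\<dots> = L ! i" using j by simp
    also have "\<dots> = Cf \<sigma> \<eta> i a b"
    proof (cases "i \<le> \<eta> a")
      case True then show ?thesis
        by (simp add: L_def nth_append Cf_eq del: upt_Suc)
    next
      case False then show ?thesis using i len
        by (simp add: L_def nth_append Cf_eq del: upt_Suc)
    qed
    finally show "\<sigma> j i = Cf \<sigma> \<eta> i a b" .
  qed
  then have "Tf \<sigma> \<eta> j a b = 0" using len by (simp only: Tf_zero simp_thms)
  then show ?thesis by blast
qed
theorem proposition4p1:
  fixes X :: "'a set" and d :: "'a \<Rightarrow> 'a \<Rightarrow> real" and \<alpha> :: "nat \<Rightarrow> 'a"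
    and \<sigma> :: "nat \<Rightarrow> nat \<Rightarrow> nat" and \<eta> :: "nat \<Rightarrow> nat" and A B S :: "'a set"
  assumes "computable_metric_space X d \<alpha>"
    and "seq_enum \<sigma> \<eta>"
    and "S \<subseteq> X" and "A \<subseteq> S" and "B \<subseteq> S"
    and "computable_up_to d \<alpha> \<sigma> \<eta> A S"
    and "computable_up_to d \<alpha> \<sigma> \<eta> B S"
  shows "computable_up_to d \<alpha> \<sigma> \<eta> (A \<union> B) S"
proof -
  obtain f where f: "computable1 f" "\<And>k. prec d A (Lambda \<alpha> \<sigma> \<eta> (f k)) ((1/2) ^ k)"
    "\<And>k. prec d (Lambda \<alpha> \<sigma> \<eta> (f k)) S ((1/2) ^ k)"
    using assms(6) unfolding computable_up_to_def by blast
  obtain g where g: "computable1 g" "\<And>k. prec d B (Lambda \<alpha> \<sigma> \<eta> (g k)) ((1/2) ^ k)"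
    "\<And>k. prec d (Lambda \<alpha> \<sigma> \<eta> (g k)) S ((1/2) ^ k)"
    using assms(7) unfolding computable_up_to_def by blast
  have se: "computable1 \<eta>" "computable2 \<sigma>" using assms(2) unfolding seq_enum_def by auto
  define h where "h k = (LEAST y. Tf \<sigma> \<eta> y (f k) (g k) = 0)" for k
  have ex: "\<And>k. \<exists>y. Tf \<sigma> \<eta> y (f k) (g k) = 0" using Tf_exists[OF assms(2)] by blast
  have hz: "Tf \<sigma> \<eta> (h k) (f k) (g k) = 0" for k
    unfolding h_def using ex[of k] by (rule LeastI_ex)
  have trT: "total_recursive (\<lambda>ys. Tf \<sigma> \<eta> (arg 0 ys) (f (arg 1 ys)) (g (arg 1 ys)))"
    by (intro tr_T se tr_c1[OF f(1)] tr_c1[OF g(1)] tr_arg)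
  have "total_recursive (\<lambda>xs. LEAST y. Tf \<sigma> \<eta> (arg 0 (y # xs)) (f (arg 1 (y # xs))) (g (arg 1 (y # xs))) = 0)"
    by (rule total_recursive.mini[OF trT]) (simp add: ex)
  then have ch: "computable1 h" unfolding computable1_def h_def by simp
  have L: "Lambda \<alpha> \<sigma> \<eta> (h k) = Lambda \<alpha> \<sigma> \<eta> (f k) \<union> Lambda \<alpha> \<sigma> \<eta> (g k)" for k
    by (rule Lambda_Tf[OF hz])
  show ?thesis unfolding computable_up_to_def
  proof (intro exI conjI allI)
    fix k
    show "prec d (A \<union> B) (Lambda \<alpha> \<sigma> \<eta> (h k)) ((1/2) ^ k)"
      using f(2)[of k] g(2)[of k] unfolding prec_def L by blast
    show "prec d (Lambda \<alpha> \<sigma> \<eta> (h k)) S ((1/2) ^ k)"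
      using f(3)[of k] g(3)[of k] unfolding prec_def L by blast
  qed (rule ch)
qed

end
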